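(* Let $(s_k)_{k\ge0}$ and $(\sigma_k)_{k\ge0}$ be a binomial transform pair and let $m$, $n$, $r$ be non-negative integers. Then $$\sum_{k = 1}^n \sum_{j = 0}^{k - 1} \frac{(- 1)^j}{n - j + 1}\binom{n}{j}\sum_{p = 0}^r (- 1)^p \binom{r}{p} s_{k + p + m - j} = \frac{(- 1)^n}{n + 1} \sum_{p = 0}^m (- 1)^p \binom{m}{p} \left( \sigma_{n + p + r} - \sigma_{p + r} \right).$$ In particular, $$\sum_{k = 1}^n \sum_{j = 0}^{k - 1} \frac{( - 1)^j }{n - j + 1}\binom{n}{j}\sum_{p = 0}^r ( - 1)^p \binom{r}{p}s_{k + p - j} = \frac{( - 1)^n }{n + 1}\left( \sigma _{n + r} - \sigma _r \right),$$ $$\sum_{k = 1}^n \sum_{j = 0}^{k - 1} \frac{( - 1)^j }{n - j + 1}\binom{n}{j}s_{k + m - j} = \frac{( - 1)^n }{n + 1}\sum_{p = 0}^m ( - 1)^p \binom{m}{p}\left( \sigma _{n + p} - \sigma _p \right),$$ and $$\sum_{k = 1}^n \sum_{j = 0}^{k - 1} \frac{(- 1)^j}{n - j + 1}\binom{n}{j} s_{k - j} = \frac{(- 1)^n}{n + 1}(\sigma_n - \sigma_0).$$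
   Context: Two sequences of complex numbers $(s_n)_{n\ge0}$ and $(\sigma_n)_{n\ge0}$ form a binomial transform pair if $\sigma_n = \sum_{k = 0}^n \binom{n}{k} (-1)^k s_k$ for all $n\ge 0$ (equivalently $s_n = \sum_{k = 0}^n \binom{n}{k} (-1)^k \sigma_k$ for all $n\ge0$). Empty sums are zero. *)

theory Defs
  imports Complex_Main
begin

definition binomial_transform_pair :: "(nat \<Rightarrow> complex) \<Rightarrow> (nat \<Rightarrow> complex) \<Rightarrow> bool" where
  "binomial_transform_pair s \<sigma> \<longleftrightarrow>
     (\<forall>n. \<sigma> n = (\<Sum>k=0..n. of_nat (n choose k) * (-1)^k * s k))"

end

theory Submission imports Defs begin

definition BT :: "(nat \<Rightarrow> complex) \<Rightarrow> nat \<Rightarrow> complex" where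
  "BT a n = (\<Sum>k=0..n. of_nat (n choose k) * (-1)^k * a k)"
definition Dop :: "(nat \<Rightarrow> complex) \<Rightarrow> nat \<Rightarrow> complex" where
  "Dop a = (\<lambda>i. a i - a (Suc i))"
definition Eop :: "(nat \<Rightarrow> complex) \<Rightarrow> nat \<Rightarrow> complex" where
  "Eop a = (\<lambda>i. a (Suc i))"

lemma Dop_apply: "Dop a j = a j - a (Suc j)" by (simp add: Dop_def)

lemma pascal_sum:
  fixes f :: "nat \<Rightarrow> 'a::comm_semiring_1"
  shows "(\<Sum>k=0..Suc n. of_nat (Suc n choose k) * f k) =
    (\<Sum>k=0..n. of_nat (n choose k) * f k) + (\<Sum>k=0..n. of_nat (n choose k) * f (Suc k))"
proof -
  have "(\<Sum>k=0..Suc n. of_nat (Suc n choose k) * f k) =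
     f 0 + (\<Sum>k=0..n. of_nat (Suc n choose Suc k) * f (Suc k))"
    by (simp add: atLeast0AtMost sum.atMost_Suc_shift del: binomial_Suc_Suc sum.atMost_Suc)
  also have "\<dots> = f 0 + (\<Sum>k=0..n. of_nat (n choose Suc k) * f (Suc k)) + (\<Sum>k=0..n. of_nat (n choose k) * f (Suc k))"
    by (simp add: sum.distrib[symmetric] algebra_simps)
  also have "f 0 + (\<Sum>k=0..n. of_nat (n choose Suc k) * f (Suc k)) = (\<Sum>k=0..Suc n. of_nat (n choose k) * f k)"
    by (simp add: atLeast0AtMost sum.atMost_Suc_shift del: sum.atMost_Suc)
  also have "\<dots> = (\<Sum>k=0..n. of_nat (n choose k) * f k)"
    by (simp add: binomial_eq_0)
  finally show ?thesis .
qed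

lemma BT_Suc: "BT a (Suc n) = BT a n - BT (Eop a) n"
  unfolding BT_def Eop_def
  using pascal_sum[of n "\<lambda>k. (-1)^k * a k"]
  by (simp add: mult.assoc sum_negf)

lemma BT_E: "BT (Eop a) = Dop (BT a)"
  by (rule ext) (simp add: Dop_def BT_Suc)

lemma BT_lin: "BT (\<lambda>i. a i - b i) n = BT a n - BT b n"
  unfolding BT_def by (simp add: algebra_simps sum_subtractf)

lemma BT_D: "BT (Dop a) = Eop (BT a)"
proof (rule ext)
  fix n
  have "BT (Dop a) n = BT a n - BT (Eop a) n"
    unfolding Dop_def using BT_lin[of a "Eop a" n] by (simp add: Eop_def)
  then show "BT (Dop a) n = Eop (BT a) n" by (simp add: BT_Suc Eop_def)
qed

lemma Dpow: "(Dop^^r) a i = (\<Sum>p=0..r. (-1)^p * of_nat (r choose p) * a (i+p))"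
proof (induction r arbitrary: a i)
  case 0 then show ?case by simp
next
  case (Suc r)
  have "(Dop^^Suc r) a i = (Dop^^r) (Dop a) i" by (simp only: funpow_Suc_right comp_def)
  also have "\<dots> = (\<Sum>p=0..r. (-1)^p * of_nat (r choose p) * (a (i+p) - a (Suc (i+p))))"
    by (subst Suc.IH) (simp add: Dop_apply)
  also have "\<dots> = (\<Sum>p=0..r. of_nat (r choose p) * ((-1)^p * a (i+p))) + (\<Sum>p=0..r. of_nat (r choose p) * ((-1)^(Suc p) * a (i + Suc p)))"
    by (simp add: sum.distrib[symmetric] algebra_simps)
  also have "\<dots> = (\<Sum>p=0..Suc r. of_nat (Suc r choose p) * ((-1)^p * a (i+p)))"
    using pascal_sum[of r "\<lambda>p. (-1)^p * a (i+p)"] by simp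
  finally show ?case by (simp add: algebra_simps)
qed

lemma Epow: "(Eop^^r) a i = a (i + r)"
  by (induction r arbitrary: i) (simp_all add: Eop_def)

lemma BT_Dpow: "BT ((Dop^^r) a) = (Eop^^r) (BT a)"
  by (induction r) (simp_all add: BT_D)

lemma BT_Epow: "BT ((Eop^^r) a) = (Dop^^r) (BT a)"
  by (induction r) (simp_all add: BT_E)

lemma alt_partial: "(\<Sum>j=0..q. (-1)^j * of_nat (Suc N choose j) :: complex) = (-1)^q * of_nat (N choose q)"
  by (induction q) (simp_all add: algebra_simps)

lemma swap_sum:
  fixes c a :: "nat \<Rightarrow> complex"
  shows "(\<Sum>k=1..n. \<Sum>j=0..k-1. c j * a (k-j)) = (\<Sum>i=1..n. a i * (\<Sum>j=0..n-i. c j))"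
proof (induction n)
  case 0 then show ?case by simp
next
  case (Suc n)
  have re: "(\<Sum>j=0..n. c j * a (Suc n - j)) = (\<Sum>i=1..n. a i * c (Suc n - i)) + a (Suc n) * c 0"
  proof -
    have "(\<Sum>j=0..n. c j * a (Suc n - j)) = (\<Sum>i\<in>(\<lambda>j. Suc n - j) ` {0..n}. a i * c (Suc n - i))"
      by (subst sum.reindex) (auto simp: inj_on_def intro!: sum.cong)
    also have "(\<lambda>j. Suc n - j) ` {0..n} = {1..Suc n}"
    proof (intro equalityI subsetI)
      fix x assume "x \<in> {1..Suc n}"
      then show "x \<in> (\<lambda>j. Suc n - j) ` {0..n}"
        by (intro image_eqI[where x="Suc n - x"]) auto
    qed auto
    finally show ?thesis by simp
  qed
  have "(\<Sum>i=1..Suc n. a i * (\<Sum>j=0..Suc n-i. c j)) = (\<Sum>i=1..n. a i * (\<Sum>j=0..Suc n-i. c j)) + a (Suc n) * c 0"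
    by simp
  also have "(\<Sum>i=1..n. a i * (\<Sum>j=0..Suc n-i. c j)) = (\<Sum>i=1..n. a i * (\<Sum>j=0..n-i. c j) + a i * c (Suc n - i))"
  proof (rule sum.cong)
    fix i assume "i \<in> {1..n}"
    then have "Suc n - i = Suc (n - i)" by auto
    then show "a i * (\<Sum>j=0..Suc n-i. c j) = a i * (\<Sum>j=0..n-i. c j) + a i * c (Suc n - i)"
      by (simp add: algebra_simps)
  qed simp
  also have "\<dots> = (\<Sum>i=1..n. a i * (\<Sum>j=0..n-i. c j)) + (\<Sum>i=1..n. a i * c (Suc n - i))"
    by (simp add: sum.distrib)
  finally show ?case using Suc re by simp
qed

lemma aux:
  fixes u X C N c :: complex
  assumes "X*C = N*c" "X \<noteq> 0" "N \<noteq> 0"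
  shows "u/X*c = u*C/N"
proof -
  have "c = X*C/N" using assms by (simp add: field_simps)
  then show ?thesis using assms by (simp add: field_simps)
qed

lemma core:
  fixes a :: "nat \<Rightarrow> complex"
  shows "(\<Sum>k=1..n. \<Sum>j=0..k-1. (-1)^j / of_nat (n - j + 1) * of_nat (n choose j) * a (k-j))
     = (-1)^n / of_nat (n+1) * (BT a n - a 0)"
proof -
  have c: "(\<Sum>j=0..n-i. (-1)^j / of_nat (n - j + 1) * of_nat (n choose j) :: complex)
      = (-1)^n / of_nat (n+1) * (of_nat (n choose i) * (-1)^i)" if "1 \<le> i" "i \<le> n" for i
  proof -
    have "(\<Sum>j=0..n-i. (-1)^j / of_nat (n - j + 1) * of_nat (n choose j) :: complex)
       = (\<Sum>j=0..n-i. (-1)^j * of_nat (Suc n choose j) / of_nat (n+1))"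
    proof (rule sum.cong)
      fix j assume "j \<in> {0..n-i}"
      then have j: "j \<le> n" using that by auto
      have N: "of_nat (n + 1) \<noteq> (0::complex)" by (metis add_eq_0_iff_both_eq_0 of_nat_eq_0_iff one_neq_zero)
      have "(Suc n - j) * (Suc n choose j) = Suc n * (n choose j)"
        using binomial_absorb_comp[of "Suc n" j] by simp
      then have "(n - j + 1) * (Suc n choose j) = (n+1) * (n choose j)"
        using j by (simp add: Suc_diff_le)
      then have "of_nat (n - j + 1) * of_nat (Suc n choose j) = (of_nat (n+1) * of_nat (n choose j) :: complex)"
        by (metis of_nat_mult)
      moreover have "of_nat (n - j + 1) \<noteq> (0::complex)" by (metis add_eq_0_iff_both_eq_0 of_nat_eq_0_iff one_neq_zero)
      ultimately show "(-1)^j / of_nat (n - j + 1) * of_nat (n choose j) = ((-1)^j * of_nat (Suc n choose j) / of_nat (n+1) :: complex)"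
        using N by (rule aux)
    qed simp
    also have "\<dots> = (\<Sum>j=0..n-i. (-1)^j * of_nat (Suc n choose j)) / of_nat (n+1)"
      by (simp add: sum_divide_distrib)
    also have "\<dots> = (-1)^(n-i) * of_nat (n choose (n-i)) / of_nat (n+1)"
      by (simp add: alt_partial)
    also have "\<dots> = (-1)^n / of_nat (n+1) * (of_nat (n choose i) * (-1)^i)"
    proof -
      have e: "(-1::complex)^n = (-1)^(n-i) * (-1)^i"
        using power_add[of "-1::complex" "n-i" i] that by simp
      have "(-1::complex)^i * (-1)^i = 1" by (simp flip: power_mult_distrib)
      then have "(-1::complex)^(n-i) = (-1)^n * (-1)^i"
        unfolding e by (simp add: mult.assoc)
      moreover have "n choose (n-i) = n choose i" using binomial_symmetric[OF \<open>i \<le> n\<close>] by simp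
      ultimately show ?thesis by simp
    qed
    finally show ?thesis .
  qed
  have "(\<Sum>k=1..n. \<Sum>j=0..k-1. (-1)^j / of_nat (n - j + 1) * of_nat (n choose j) * a (k-j))
     = (\<Sum>i=1..n. a i * (\<Sum>j=0..n-i. (-1)^j / of_nat (n - j + 1) * of_nat (n choose j)))"
    using swap_sum[of "\<lambda>j. (-1)^j / of_nat (n - j + 1) * of_nat (n choose j)" a n] by simp
  also have "\<dots> = (\<Sum>i=1..n. (-1)^n / of_nat (n+1) * (of_nat (n choose i) * (-1)^i * a i))"
  proof (rule sum.cong)
    fix i assume "i \<in> {1..n}"
    then have i: "1 \<le> i" "i \<le> n" by auto
    show "a i * (\<Sum>j=0..n-i. (-1)^j / of_nat (n - j + 1) * of_nat (n choose j)) = (-1)^n / of_nat (n+1) * (of_nat (n choose i) * (-1)^i * a i)"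
      unfolding c[OF i] by (simp add: algebra_simps)
  qed simp
  also have "\<dots> = (-1)^n / of_nat (n+1) * (\<Sum>i=1..n. of_nat (n choose i) * (-1)^i * a i)"
    by (simp add: sum_distrib_left)
  also have "(\<Sum>i=1..n. of_nat (n choose i) * (-1)^i * a i) = BT a n - a 0"
    unfolding BT_def by (simp add: sum.atLeast_Suc_atMost)
  finally show ?thesis .
qed

lemma BT_0: "BT a 0 = a 0" by (simp add: BT_def)

lemma gen:
  fixes s \<sigma> :: "nat \<Rightarrow> complex" and m n r :: nat
  assumes "binomial_transform_pair s \<sigma>"
  shows "(\<Sum>k=1..n. \<Sum>j=0..k-1. (-1)^j / of_nat (n - j + 1) * of_nat (n choose j) *
            (\<Sum>p=0..r. (-1)^p * of_nat (r choose p) * s (k + p + m - j)))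
          = (-1)^n / of_nat (n + 1) *
            (\<Sum>p=0..m. (-1)^p * of_nat (m choose p) * (\<sigma> (n + p + r) - \<sigma> (p + r)))"
proof -
  have sig: "\<sigma> = BT s" using assms by (auto simp: binomial_transform_pair_def BT_def fun_eq_iff)
  define u where "u = (Dop^^r) ((Eop^^m) s)"
  have u: "u i = (\<Sum>p=0..r. (-1)^p * of_nat (r choose p) * s (i + p + m))" for i
    by (simp add: u_def Dpow Epow add.assoc)
  have BTu: "BT u i = (\<Sum>p=0..m. (-1)^p * of_nat (m choose p) * \<sigma> (i + r + p))" for i
    by (simp add: u_def BT_Dpow BT_Epow Epow Dpow sig)
  have "(\<Sum>k=1..n. \<Sum>j=0..k-1. (-1)^j / of_nat (n - j + 1) * of_nat (n choose j) *
            (\<Sum>p=0..r. (-1)^p * of_nat (r choose p) * s (k + p + m - j)))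
      = (\<Sum>k=1..n. \<Sum>j=0..k-1. (-1)^j / of_nat (n - j + 1) * of_nat (n choose j) * u (k - j))"
  proof (intro sum.cong refl)
    fix k j assume "k \<in> {1..n}" "j \<in> {0..k-1}"
    then have "k + p + m - j = (k - j) + p + m" for p by auto
    then show "(-1)^j / of_nat (n - j + 1) * of_nat (n choose j) *
            (\<Sum>p=0..r. (-1)^p * of_nat (r choose p) * s (k + p + m - j))
       = (-1)^j / of_nat (n - j + 1) * of_nat (n choose j) * u (k - j)"
      by (simp add: u)
  qed
  also have "\<dots> = (-1)^n / of_nat (n+1) * (BT u n - BT u 0)"
    unfolding BT_0 by (rule core)
  also have "BT u n - BT u 0 = (\<Sum>p=0..m. (-1)^p * of_nat (m choose p) * (\<sigma> (n + p + r) - \<sigma> (p + r)))"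
    by (simp add: BTu sum_subtractf[symmetric] algebra_simps)
  finally show ?thesis .
qed

theorem theorem10:
  fixes s \<sigma> :: "nat \<Rightarrow> complex" and m n r :: nat
  assumes "binomial_transform_pair s \<sigma>"
  shows "((\<Sum>k=1..n. \<Sum>j=0..k-1. (-1)^j / of_nat (n - j + 1) * of_nat (n choose j) *
            (\<Sum>p=0..r. (-1)^p * of_nat (r choose p) * s (k + p + m - j)))
          = (-1)^n / of_nat (n + 1) *
            (\<Sum>p=0..m. (-1)^p * of_nat (m choose p) * (\<sigma> (n + p + r) - \<sigma> (p + r))))
    \<and> ((\<Sum>k=1..n. \<Sum>j=0..k-1. (-1)^j / of_nat (n - j + 1) * of_nat (n choose j) *
            (\<Sum>p=0..r. (-1)^p * of_nat (r choose p) * s (k + p - j)))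
          = (-1)^n / of_nat (n + 1) * (\<sigma> (n + r) - \<sigma> r))
    \<and> ((\<Sum>k=1..n. \<Sum>j=0..k-1. (-1)^j / of_nat (n - j + 1) * of_nat (n choose j) * s (k + m - j))
          = (-1)^n / of_nat (n + 1) *
            (\<Sum>p=0..m. (-1)^p * of_nat (m choose p) * (\<sigma> (n + p) - \<sigma> p)))
    \<and> ((\<Sum>k=1..n. \<Sum>j=0..k-1. (-1)^j / of_nat (n - j + 1) * of_nat (n choose j) * s (k - j))
          = (-1)^n / of_nat (n + 1) * (\<sigma> n - \<sigma> 0))"
  using gen[OF assms, of n r m] gen[OF assms, of n r 0] gen[OF assms, of n 0 m] gen[OF assms, of n 0 0]
  by simp

end
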